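(* Let $a>0$, $\beta>0$, let $\lambda$ be feasible, and let $C_1>25$. Then there exists $0<\delta_g(\beta,\lambda,C_1)\le\delta_\mu(\beta,\lambda)$ such that for every $0<\delta\le\delta_g$ and every real $k\ge k_0(\delta)$, \[ |g|^2\le C_1\delta^2 . \]
   Context: For $0<\delta<1$ and constants $\beta>0$, $\lambda\in\mathbb{R}$, put $\mu=\delta+\lambda\delta^{\beta}$. The constant $\lambda$ is called feasible if $\lambda>0$ when $0<\beta<1$, $\lambda\ge -1$ when $\beta=1$, and $\lambda\neq 0$ when $\beta>1$. For feasible $\lambda$, $\delta_\mu=\delta_\mu(\beta,\lambda)\in(0,1)$ denotes a number such that $\mu\ge 0$ for all $0<\delta\le\delta_\mu$. For $k\in\mathbb{R}$ define \[ g=g(k,\delta)=\mathrm{i}\delta\left[1-\frac{(\delta+2\mathrm{i})(2\mathrm{i}-\lambda\delta^{\beta})}{\delta(2\delta+\lambda\delta^{\beta})}\mathrm{e}^{-2|k|a}\right], \qquad k_0(\delta)=\frac{1}{2a}\ln\!\left(\frac{1}{2\delta^2+\lambda\delta^{\beta+1}}\right). \] *)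

theory Defs
  imports "HOL-Analysis.Analysis"
begin

definition feasible :: "real \<Rightarrow> real \<Rightarrow> bool" where
  "feasible beta lam \<longleftrightarrow>
     (beta < 1 \<longrightarrow> lam > 0) \<and> (beta = 1 \<longrightarrow> lam \<ge> -1) \<and> (beta > 1 \<longrightarrow> lam \<noteq> 0)"

definition mu :: "real \<Rightarrow> real \<Rightarrow> real \<Rightarrow> real" where
  "mu beta lam \<delta> = \<delta> + lam * \<delta> powr beta"

definition is_delta_mu :: "real \<Rightarrow> real \<Rightarrow> real \<Rightarrow> bool" where
  "is_delta_mu beta lam d \<longleftrightarrow> 0 < d \<and> d < 1 \<and> (\<forall>\<delta>. 0 < \<delta> \<and> \<delta> \<le> d \<longrightarrow> mu beta lam \<delta> \<ge> 0)"

definition g :: "real \<Rightarrow> real \<Rightarrow> real \<Rightarrow> real \<Rightarrow> real \<Rightarrow> complex" where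
  "g a beta lam k \<delta> = \<i> * of_real \<delta> *
     (1 - ((of_real \<delta> + 2 * \<i>) * (2 * \<i> - of_real (lam * \<delta> powr beta)))
            / of_real (\<delta> * (2 * \<delta> + lam * \<delta> powr beta))
          * of_real (exp (- 2 * \<bar>k\<bar> * a)))"

definition k0 :: "real \<Rightarrow> real \<Rightarrow> real \<Rightarrow> real \<Rightarrow> real" where
  "k0 a beta lam \<delta> = (1 / (2 * a)) * ln (1 / (2 * \<delta>\<^sup>2 + lam * \<delta> powr (beta + 1)))"

end

theory Submission
  imports Defs
begin

lemma cmod_sq1: "(cmod (complex_of_real d + 2 * \<i>))\<^sup>2 = d\<^sup>2 + 4"
  by (simp add: cmod_def power2_eq_square)

lemma cmod_sq2: "(cmod (2 * \<i> - complex_of_real x))\<^sup>2 = 4 + x\<^sup>2"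
  by (simp add: cmod_def power2_eq_square)

theorem lemma4p1:
  fixes a beta lam C1 d_mu :: real
  assumes "a > 0" and "beta > 0" and "feasible beta lam" and "C1 > 25"
    and "is_delta_mu beta lam d_mu"
  shows "\<exists>dg. 0 < dg \<and> dg \<le> d_mu \<and>
           (\<forall>\<delta> k. 0 < \<delta> \<and> \<delta> \<le> dg \<and> k \<ge> k0 a beta lam \<delta> \<longrightarrow>
              (cmod (g a beta lam k \<delta>))\<^sup>2 \<le> C1 * \<delta>\<^sup>2)"
proof -
  define t where "t = sqrt C1 - 1"
  have "sqrt C1 > 5" using assms(4) real_less_rsqrt by force
  hence t4: "t > 4" unfolding t_def by simp
  define e where "e = t - 4"
  have e0: "e > 0" using t4 e_def by simp
  define c where "c = e / (lam\<^sup>2 + 1)"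
  have c0: "c > 0" unfolding c_def using e0 by (intro divide_pos_pos) (auto intro: add_nonneg_pos)
  have dm: "0 < d_mu" "\<forall>\<delta>. 0 < \<delta> \<and> \<delta> \<le> d_mu \<longrightarrow> mu beta lam \<delta> \<ge> 0"
    using assms(5) unfolding is_delta_mu_def by auto
  define dg where "dg = min d_mu (min (sqrt e) (c powr (1/(2*beta))))"
  have dg0: "dg > 0" unfolding dg_def using dm e0 c0 by simp
  have "\<forall>\<delta> k. 0 < \<delta> \<and> \<delta> \<le> dg \<and> k \<ge> k0 a beta lam \<delta> \<longrightarrow>
              (cmod (g a beta lam k \<delta>))\<^sup>2 \<le> C1 * \<delta>\<^sup>2"
  proof (intro allI impI)
    fix \<delta> k assume h: "0 < \<delta> \<and> \<delta> \<le> dg \<and> k \<ge> k0 a beta lam \<delta>"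
    have d0: "\<delta> > 0" using h by simp
    have dmu: "\<delta> \<le> d_mu" using h dg_def by simp
    have "\<delta> \<le> sqrt e" using h dg_def by simp
    hence de: "\<delta>\<^sup>2 \<le> e" using d0 e0 by (metis less_imp_le power_mono real_sqrt_pow2)
    have "\<delta> \<le> c powr (1/(2*beta))" using h dg_def by simp
    hence "\<delta> powr (2*beta) \<le> (c powr (1/(2*beta))) powr (2*beta)"
      using d0 assms(2) by (intro powr_mono2) auto
    also have "\<dots> = c" using c0 assms(2) by (simp add: powr_powr)
    finally have dc: "\<delta> powr (2*beta) \<le> c" .
    define p where "p = \<delta> powr beta"
    have p2: "p\<^sup>2 = \<delta> powr (2*beta)" unfolding p_def
      by (metis powr_powr d0 less_imp_le mult.commute powr_realpow' order_less_irrefl powr_numeral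
          powr_ge_zero zero_less_numeral)
    have "lam\<^sup>2 * p\<^sup>2 \<le> lam\<^sup>2 * c" using p2 dc by (simp add: mult_left_mono)
    also have "\<dots> \<le> e"
    proof -
      have pos: "lam\<^sup>2 + 1 > 0" by (simp add: add_nonneg_pos)
      have "lam\<^sup>2 * (e / (lam\<^sup>2 + 1)) = e * (lam\<^sup>2 / (lam\<^sup>2 + 1))" by simp
      also have "\<dots> \<le> e * 1" using e0 pos by (intro mult_left_mono) auto
      finally show ?thesis by (simp add: c_def)
    qed
    finally have lp: "(lam * p)\<^sup>2 \<le> e" by (simp add: power_mult_distrib)
    define D where "D = \<delta> * (2 * \<delta> + lam * p)"
    have "mu beta lam \<delta> \<ge> 0" using dm(2) d0 dmu by auto
    hence "\<delta> + lam * p \<ge> 0" unfolding mu_def p_def by simp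
    hence D0: "D > 0" unfolding D_def using d0 by (simp add: add_pos_nonneg)
    define E where "E = exp (- 2 * \<bar>k\<bar> * a)"
    have E0: "E > 0" unfolding E_def by simp
    have k0eq: "k0 a beta lam \<delta> = (1/(2*a)) * ln (1/D)"
    proof -
      have "\<delta> powr (beta + 1) = \<delta> * \<delta> powr beta" using d0 powr_add[of \<delta> beta 1] by simp
      hence "2 * \<delta>\<^sup>2 + lam * \<delta> powr (beta + 1) = D"
        unfolding D_def p_def by (simp add: power2_eq_square algebra_simps)
      thus ?thesis unfolding k0_def by simp
    qed
    have "2 * a * ((1/(2*a)) * ln (1/D)) \<le> 2 * a * k" using h k0eq assms(1)
      by (intro mult_left_mono) auto
    hence "2 * a * k \<ge> ln (1/D)" using assms(1) by simp
    moreover have "2 * a * k \<le> 2 * a * \<bar>k\<bar>" using assms(1)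
      by (intro mult_left_mono) auto
    ultimately have "2 * \<bar>k\<bar> * a \<ge> ln (1/D)" by (simp add: algebra_simps)
    hence "E \<le> exp (- ln (1/D))" unfolding E_def by simp
    also have "\<dots> = D" using D0 by (simp add: ln_div exp_minus)
    finally have ED: "E \<le> D" .
    define z where "z = (complex_of_real \<delta> + 2 * \<i>) * (2 * \<i> - complex_of_real (lam * p))"
    have geq: "g a beta lam k \<delta> = \<i> * of_real \<delta> * (1 - z * of_real (E / D))"
      unfolding g_def z_def E_def D_def p_def by simp
    have zsq: "(cmod z)\<^sup>2 = (\<delta>\<^sup>2 + 4) * (4 + (lam*p)\<^sup>2)"
      unfolding z_def norm_mult power_mult_distrib cmod_sq1 cmod_sq2 by simp
    also have "\<dots> \<le> (4 + e) * (4 + e)" using de lp e0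
      by (intro mult_mono) auto
    also have "\<dots> = (4+e)\<^sup>2" by (rule power2_eq_square[symmetric])
    finally have zz: "(cmod z)\<^sup>2 \<le> (4+e)\<^sup>2" .
    have e4: "0 \<le> 4 + e" using e0 by linarith
    have "cmod z \<le> 4 + e" by (rule power2_le_imp_le[OF zz e4])
    hence zt: "cmod z \<le> t" using e_def by linarith
    have q1: "0 \<le> E / D" using E0 D0 by (intro divide_nonneg_pos) auto
    have q2: "E / D \<le> 1" using D0 ED by (simp add: divide_le_eq_1)
    note q = q1 q2
    define w where "w = z * complex_of_real (E / D)"
    have "cmod w = cmod z * (E/D)" unfolding w_def norm_mult norm_of_real abs_of_nonneg[OF q1] by (rule refl)
    also have "\<dots> \<le> cmod z * 1" using q by (intro mult_left_mono) auto
    also have "\<dots> = cmod z" by (rule mult_1_right)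
    finally have wz: "cmod w \<le> cmod z" .
    have wt: "cmod w \<le> t" using wz zt by (rule order_trans)
    have n1: "cmod (1::complex) = 1" by (rule norm_one)
    have "cmod (1 - w) \<le> cmod (1::complex) + cmod w" by (rule norm_triangle_ineq4)
    hence w1: "cmod (1 - w) \<le> 1 + t" using n1 wt by linarith
    have "(cmod (1 - w))\<^sup>2 \<le> (1+t)\<^sup>2" by (rule power_mono[OF w1 norm_ge_zero])
    also have "(1+t)\<^sup>2 = C1" unfolding t_def using assms(4) by simp
    finally have w2: "(cmod (1 - w))\<^sup>2 \<le> C1" .
    have "cmod (g a beta lam k \<delta>) = \<delta> * cmod (1 - w)"
      unfolding geq w_def norm_mult using d0 by simp
    hence "(cmod (g a beta lam k \<delta>))\<^sup>2 = \<delta>\<^sup>2 * (cmod (1 - w))\<^sup>2"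
      by (simp add: power_mult_distrib)
    also have "\<dots> \<le> \<delta>\<^sup>2 * C1" using w2 by (intro mult_left_mono) auto
    finally show "(cmod (g a beta lam k \<delta>))\<^sup>2 \<le> C1 * \<delta>\<^sup>2" by (simp add: mult.commute)
  qed
  moreover have "dg \<le> d_mu" unfolding dg_def by simp
  ultimately show ?thesis using dg0 by blast
qed

end
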